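(* $L_1(z)=R(z,1)$, where $L_1(z)$ is the coefficient of $x^1$ in $L(z,x)$.
   Context: Formulas are built from atoms by a binary product: every formula is an atom or $A\bullet B$. A context is a finite (possibly empty) list of formulas; commas denote concatenation; its length is its number of formulas. Size: $|p|=0$, $|A\bullet B|=1+|A|+|B|$. Frontier: $\mathrm{fr}(p)=p$, $\mathrm{fr}(A\bullet B)=\mathrm{fr}(A),\mathrm{fr}(B)$. A context is irreducible if its leftmost formula is not a product (it is empty or begins with an atom). A focused derivation is a finite derivation tree with no undischarged premises using only: ($\bullet L$) from $A,B,\Delta\vdash C$ infer $A\bullet B,\Delta\vdash C$; ($\bullet R^{foc}$) from $\Gamma\vdash A$ and $\Delta\vdash B$ infer $\Gamma,\Delta\vdash A\bullet B$ with $\Gamma$ irreducible; ($id^{atm}$) $p\vdash p$ for atoms $p$. For each $n$ fix the frontier $p_0,\dots,p_n$ of distinct atoms. Let $\ell_{n,k}$ (resp. $r_{n,k}$) be the number of focused derivations of sequents $\Gamma\vdash B$ with $|B|=n$, $\mathrm{fr}(B)=p_0,\dots,p_n$, and $\Gamma$ a context (resp. an irreducible context) of length $k$. $L(z,x)=\sum_{n,k}\ell_{n,k}z^nx^k$ and $R(z,x)=\sum_{n,k}r_{n,k}z^nx^k$ (formal power series). *)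

theory Defs
  imports Complex_Main
begin

datatype frm = At nat | Prod frm frm

fun fsize :: "frm \<Rightarrow> nat" where
  "fsize (At p) = 0"
| "fsize (Prod A B) = 1 + fsize A + fsize B"

fun fr :: "frm \<Rightarrow> nat list" where
  "fr (At p) = [p]"
| "fr (Prod A B) = fr A @ fr B"

definition irreducible :: "frm list \<Rightarrow> bool" where
  "irreducible \<Gamma> \<longleftrightarrow> \<Gamma> = [] \<or> (\<exists>p. hd \<Gamma> = At p)"

text \<open>Focused derivation trees; the conclusion of each rule instance is
  determined by its premises, so trees are exactly derivations.
  LeftP d: from A,B,Delta |- C infer A*B,Delta |- C.
  RightP d1 d2: from Gamma |- A and Delta |- B infer Gamma,Delta |- A*B.\<close>
datatype deriv = Ident nat | LeftP deriv | RightP deriv deriv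

fun concl :: "deriv \<Rightarrow> frm list \<times> frm" where
  "concl (Ident p) = ([At p], At p)"
| "concl (LeftP d) = (case concl d of (\<Gamma>, C) \<Rightarrow>
      (Prod (\<Gamma> ! 0) (\<Gamma> ! 1) # drop 2 \<Gamma>, C))"
| "concl (RightP d1 d2) = (case (concl d1, concl d2) of ((\<Gamma>, A), (\<Delta>, B)) \<Rightarrow>
      (\<Gamma> @ \<Delta>, Prod A B))"

fun valid :: "deriv \<Rightarrow> bool" where
  "valid (Ident p) = True"
| "valid (LeftP d) = (valid d \<and> 2 \<le> length (fst (concl d)))"
| "valid (RightP d1 d2) = (valid d1 \<and> valid d2 \<and> irreducible (fst (concl d1)))"

definition ell :: "nat \<Rightarrow> nat \<Rightarrow> nat" where
  "ell n k = card {d. valid d \<and> fsize (snd (concl d)) = n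
      \<and> fr (snd (concl d)) = [0..<Suc n] \<and> length (fst (concl d)) = k}"

definition rr :: "nat \<Rightarrow> nat \<Rightarrow> nat" where
  "rr n k = card {d. valid d \<and> fsize (snd (concl d)) = n
      \<and> fr (snd (concl d)) = [0..<Suc n] \<and> length (fst (concl d)) = k
      \<and> irreducible (fst (concl d))}"

end

theory Submission
  imports Defs
begin

fun nodes :: "deriv \<Rightarrow> nat" where
  "nodes (Ident p) = 1"
| "nodes (LeftP d) = Suc (nodes d)"
| "nodes (RightP d1 d2) = Suc (nodes d1 + nodes d2)"

fun labs :: "deriv \<Rightarrow> nat set" where
  "labs (Ident p) = {p}"
| "labs (LeftP d) = labs d"
| "labs (RightP d1 d2) = labs d1 \<union> labs d2"

fun strip :: "deriv \<Rightarrow> deriv" where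
  "strip (LeftP d) = strip d"
| "strip d = d"

fun nl :: "deriv \<Rightarrow> nat" where
  "nl (LeftP d) = Suc (nl d)"
| "nl d = 0"

lemma inv:
  "valid d \<Longrightarrow> fst (concl d) \<noteq> [] \<and>
     nodes d + length (fst (concl d)) + 1 \<le> 3 * length (fr (snd (concl d))) \<and>
     labs d \<subseteq> set (fr (snd (concl d)))"
proof (induction d)
  case (Ident x)
  then show ?case by simp
next
  case (LeftP d)
  then show ?case by (auto split: prod.splits)
next
  case (RightP d1 d2)
  then show ?case by (auto split: prod.splits)
qed

lemma concl_LeftP_snd: "snd (concl (LeftP e)) = snd (concl e)"
  by (auto split: prod.splits)

lemma concl_LeftP_len: "2 \<le> length (fst (concl e)) \<Longrightarrow> length (fst (concl (LeftP e))) = length (fst (concl e)) - 1"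
  by (auto split: prod.splits)

lemma not_irr_LeftP: "\<not> irreducible (fst (concl (LeftP e)))"
  by (auto simp: irreducible_def split: prod.splits)

lemma irr_nonLeft: "valid d \<Longrightarrow> (\<And>e. d \<noteq> LeftP e) \<Longrightarrow> irreducible (fst (concl d))"
proof (cases d)
  case (RightP d1 d2)
  assume "valid d"
  then have "irreducible (fst (concl d1))" "fst (concl d1) \<noteq> []" using RightP inv[of d1] by auto
  then show ?thesis using RightP by (auto simp: irreducible_def split: prod.splits)
qed (auto simp: irreducible_def)

lemma strip_not_Left: "strip d \<noteq> LeftP e"
  by (induction d rule: strip.induct) auto

lemma strip_props: "valid d \<Longrightarrow> valid (strip d) \<and>
   length (fst (concl (strip d))) = length (fst (concl d)) + nl d \<and>
   snd (concl (strip d)) = snd (concl d) \<and> d = (LeftP ^^ nl d) (strip d)"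
proof (induction d)
  case (LeftP d)
  then show ?case using concl_LeftP_len[of d] concl_LeftP_snd[of d] by auto
qed auto

lemma pow_props: "valid d \<Longrightarrow> j < length (fst (concl d)) \<Longrightarrow>
   valid ((LeftP ^^ j) d) \<and> length (fst (concl ((LeftP ^^ j) d))) = length (fst (concl d)) - j
   \<and> snd (concl ((LeftP ^^ j) d)) = snd (concl d)"
proof (induction j)
  case (Suc j)
  then show ?case using concl_LeftP_len[of "(LeftP ^^ j) d"] concl_LeftP_snd[of "(LeftP ^^ j) d"]
    by auto
qed auto

lemma strip_pow: "strip ((LeftP ^^ j) d) = strip d"
  by (induction j) auto

lemma strip_id: "(\<And>e. d \<noteq> LeftP e) \<Longrightarrow> strip d = d"
  by (cases d) auto

definition BD :: "nat \<Rightarrow> nat \<Rightarrow> deriv set" where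
  "BD N M = {d. nodes d \<le> N \<and> labs d \<subseteq> {..<M}}"

lemma nodes_pos: "nodes d \<ge> 1"
  by (cases d) auto

lemma BD_finite: "finite (BD N M)"
proof (induction N)
  case 0
  have "BD 0 M = {}" unfolding BD_def using nodes_pos by (metis (no_types, lifting) empty_Collect_eq le_0_eq not_one_le_zero)
  then show ?case by simp
next
  case (Suc N)
  have "BD (Suc N) M \<subseteq> Ident ` {..<M} \<union> LeftP ` BD N M \<union> (\<lambda>(a,b). RightP a b) ` (BD N M \<times> BD N M)"
  proof
    fix d assume "d \<in> BD (Suc N) M"
    then show "d \<in> Ident ` {..<M} \<union> LeftP ` BD N M \<union> (\<lambda>(a,b). RightP a b) ` (BD N M \<times> BD N M)"
      using nodes_pos by (cases d) (auto simp: BD_def)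
  qed
  then show ?case using Suc by (meson finite_SigmaI finite_Un finite_imageI finite_lessThan finite_subset)
qed


definition PB :: "nat \<Rightarrow> deriv \<Rightarrow> bool" where
  "PB n d \<longleftrightarrow> valid d \<and> fsize (snd (concl d)) = n \<and> fr (snd (concl d)) = [0..<Suc n]"

lemma SR_finite: "finite {d. PB n d}"
proof -
  have "{d. PB n d} \<subseteq> BD (3 * Suc n) (Suc n)"
  proof
    fix d assume "d \<in> {d. PB n d}"
    then have v: "valid d" and f: "fr (snd (concl d)) = [0..<Suc n]" by (auto simp: PB_def)
    from inv[OF v] f show "d \<in> BD (3 * Suc n) (Suc n)" by (auto simp: BD_def)
  qed
  then show ?thesis using BD_finite finite_subset by blast
qed

lemma len_bound: "PB n d \<Longrightarrow> length (fst (concl d)) < 3 * Suc n"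
  using inv[of d] by (auto simp: PB_def)

lemma card_eq: "card {d. PB n d \<and> length (fst (concl d)) = 1}
   = card {d. PB n d \<and> irreducible (fst (concl d))}"
proof -
  define g where "g d = (LeftP ^^ (length (fst (concl d)) - 1)) d" for d
  let ?SR = "{d. PB n d \<and> irreducible (fst (concl d))}"
  let ?SL = "{d. PB n d \<and> length (fst (concl d)) = 1}"
  have nl: "\<And>d. PB n d \<Longrightarrow> irreducible (fst (concl d)) \<Longrightarrow> (\<And>e. d \<noteq> LeftP e)"
    using not_irr_LeftP by blast
  have "bij_betw g ?SR ?SL"
    unfolding bij_betw_def
  proof
    show "inj_on g ?SR"
    proof (rule inj_onI)
      fix x y assume "x \<in> ?SR" "y \<in> ?SR" "g x = g y"
      then have "strip (g x) = strip (g y)" by simp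
      then show "x = y" unfolding g_def strip_pow using strip_id nl \<open>x \<in> ?SR\<close> \<open>y \<in> ?SR\<close>
        by (metis (no_types, lifting) mem_Collect_eq)
    qed
    show "g ` ?SR = ?SL"
    proof
      show "g ` ?SR \<subseteq> ?SL"
      proof
        fix y assume "y \<in> g ` ?SR"
        then obtain d where d: "d \<in> ?SR" "y = g d" by blast
        then have v: "valid d" and "fst (concl d) \<noteq> []" using inv[of d] by (auto simp: PB_def)
        then have ne: "length (fst (concl d)) - 1 < length (fst (concl d))" "length (fst (concl d)) \<ge> 1" by (auto simp: Suc_le_eq)
        from pow_props[OF v ne(1)] ne(2) d show "y \<in> ?SL"
          by (auto simp: PB_def g_def)
      qed
      show "?SL \<subseteq> g ` ?SR"
      proof
        fix d assume d: "d \<in> ?SL"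
        then have v: "valid d" by (auto simp: PB_def)
        have sp: "valid (strip d) \<and>
           length (fst (concl (strip d))) = length (fst (concl d)) + nl d \<and>
           snd (concl (strip d)) = snd (concl d) \<and> d = (LeftP ^^ nl d) (strip d)"
          using strip_props[OF v] .
        have irr: "irreducible (fst (concl (strip d)))"
          using irr_nonLeft sp strip_not_Left by blast
        have "strip d \<in> ?SR" using sp irr d by (auto simp: PB_def)
        moreover have "g (strip d) = d" using sp d unfolding g_def by simp
        ultimately show "d \<in> g ` ?SR" by (metis image_eqI)
      qed
    qed
  qed
  then show ?thesis by (metis bij_betw_same_card)
qed

theorem proposition3p3:
  shows "\<forall>n. ell n 1 = (\<Sum>k. rr n k)"
proof
  fix n
  define A where "A k = {d. PB n d \<and> irreducible (fst (concl d)) \<and> length (fst (concl d)) = k}" for k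
  have rrA: "rr n k = card (A k)" for k
    unfolding rr_def A_def PB_def by (rule arg_cong[where f=card]) auto
  have "(\<Sum>k. rr n k) = (\<Sum>k\<in>{..<3 * Suc n}. rr n k)"
  proof (rule suminf_finite)
    fix k assume "k \<notin> {..<3 * Suc n}"
    then have "A k = {}" using len_bound unfolding A_def by fastforce
    then show "rr n k = 0" using rrA by simp
  qed simp
  also have "\<dots> = card (\<Union> (A ` {..<3 * Suc n}))"
    unfolding rrA
    by (rule card_UN_disjoint[symmetric]) (auto simp: A_def intro: finite_subset[OF _ SR_finite])
  also have "\<Union> (A ` {..<3 * Suc n}) = {d. PB n d \<and> irreducible (fst (concl d))}"
    using len_bound unfolding A_def by blast
  also have "card \<dots> = card {d. PB n d \<and> length (fst (concl d)) = 1}"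
    using card_eq by simp
  also have "\<dots> = ell n 1"
    unfolding ell_def PB_def by (rule arg_cong[where f=card]) auto
  finally show "ell n 1 = (\<Sum>k. rr n k)" by simp
qed

end
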